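(* Let $\kappa\in[0,1)$, let $(Q_n)_{n\ge0}$ be $\kappa$-strict pseudocontractions $\mathcal H\to\mathcal H$ with $\mathrm{Fix}(Q_n)=F$ for all $n$ (a set independent of $n$), and let $\alpha_n\in(\kappa,1)$. Assume that for every subsequence $(\sigma(n))$ there are a further subsequence $(\mu(n))$ and a $\kappa$-strict pseudocontraction $Q:\mathcal H\to\mathcal H$ with $\mathrm{Fix}(Q)=F$ such that $Q_{\mu(n)}\to Q$ uniformly on bounded subsets of $\mathcal H$. Let $T_n x=\frac{x+R_nx}{2}+\frac12\big(\frac{\kappa-\alpha_n}{1-\alpha_n}\big)(x-R_nx)$ with $R_nx=\alpha_nx+(1-\alpha_n)Q_nx$. Then $(T_n)_{n\ge0}$ is coherent: for every bounded sequence $(z_n)_{n\ge0}$ in $\mathcal H$ with $\sum_n\|z_{n+1}-z_n\|^2<\infty$ and $\sum_n\|z_n-T_nz_n\|^2<\infty$, every weak cluster point of $(z_n)$ belongs to $\bigcap_{n\ge0}\mathrm{Fix}(T_n)$ $(=F)$.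
   Context: A map $Q:\mathcal H\to\mathcal H$ is a $\kappa$-strict pseudocontraction ($0\le\kappa<1$) if $\|Qx-Qy\|^2\le\|x-y\|^2+\kappa\|(I-Q)x-(I-Q)y\|^2$ for all $x,y$. $\mathrm{Fix}(T)=\{x:Tx=x\}$. $\mathcal H$ is a real Hilbert space. *)

theory Defs
  imports "HOL-Analysis.Analysis"
begin

definition strict_pseudocontraction :: "real \<Rightarrow> ('a::real_inner \<Rightarrow> 'a) \<Rightarrow> bool" where
  "strict_pseudocontraction \<kappa> Q \<longleftrightarrow> 0 \<le> \<kappa> \<and> \<kappa> < 1 \<and>
     (\<forall>x y. (norm (Q x - Q y))\<^sup>2 \<le> (norm (x - y))\<^sup>2 + \<kappa> * (norm ((x - Q x) - (y - Q y)))\<^sup>2)"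

definition Fix :: "('a \<Rightarrow> 'a) \<Rightarrow> 'a set" where
  "Fix T = {x. T x = x}"

definition weakly_converges_to :: "(nat \<Rightarrow> 'a::real_inner) \<Rightarrow> 'a \<Rightarrow> bool" where
  "weakly_converges_to z x \<longleftrightarrow> (\<forall>y. (\<lambda>n. inner (z n) y) \<longlonglongrightarrow> inner x y)"

definition weak_cluster_point :: "(nat \<Rightarrow> 'a::real_inner) \<Rightarrow> 'a \<Rightarrow> bool" where
  "weak_cluster_point z x \<longleftrightarrow> (\<exists>r. strict_mono r \<and> weakly_converges_to (z \<circ> r) x)"

end

theory Submission
  imports Defs
begin

lemma ism:
  assumes "strict_pseudocontraction \<kappa> Q"
  shows "(1-\<kappa>)/2 * (norm ((u - Q u) - (v - Q v)))\<^sup>2 \<le> inner (u - v) ((u - Q u) - (v - Q v))"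
proof -
  define a where "a = u - v"
  define b where "b = (u - Q u) - (v - Q v)"
  have e: "Q u - Q v = a - b" unfolding a_def b_def by (simp add: algebra_simps)
  have h: "(norm (a - b))\<^sup>2 \<le> (norm a)\<^sup>2 + \<kappa> * (norm b)\<^sup>2"
    using assms unfolding strict_pseudocontraction_def by (metis e a_def b_def)
  have "(norm (a - b))\<^sup>2 = (norm a)\<^sup>2 - 2 * inner a b + (norm b)\<^sup>2"
    by (simp add: power2_norm_eq_inner inner_diff_left inner_diff_right inner_commute)
  with h show ?thesis unfolding a_def[symmetric] b_def[symmetric] by (simp add: algebra_simps)
qed

lemma demi:
  fixes w :: "nat \<Rightarrow> 'a::real_inner"
  assumes sp: "strict_pseudocontraction \<kappa> Q'"
    and bd: "bounded (range w)"
    and lim: "(\<lambda>k. w k - Q' (w k)) \<longlonglongrightarrow> 0"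
    and wk: "\<forall>y. (\<lambda>k. inner (w k) y) \<longlonglongrightarrow> inner x y"
  shows "Q' x = x"
proof -
  define A where "A u = u - Q' u" for u
  have k1: "\<kappa> < 1" using sp unfolding strict_pseudocontraction_def by auto
  have ineq: "\<And>k. (1-\<kappa>)/2 * (norm (A (w k) - A x))\<^sup>2 \<le> inner (w k - x) (A (w k) - A x)"
    unfolding A_def by (rule ism[OF sp])
  have L1: "(\<lambda>k. (1-\<kappa>)/2 * (norm (A (w k) - A x))\<^sup>2) \<longlonglongrightarrow> (1-\<kappa>)/2 * (norm (0 - A x))\<^sup>2"
    using lim unfolding A_def[symmetric]
    by (intro tendsto_intros) auto
  obtain M where M: "\<And>k. norm (w k) \<le> M" using bd unfolding bounded_iff by auto
  have Az: "(\<lambda>k. A (w k)) \<longlonglongrightarrow> 0" using lim unfolding A_def .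
  have nAz: "(\<lambda>k. norm (A (w k))) \<longlonglongrightarrow> 0" using Az tendsto_norm_zero by blast
  have t1: "(\<lambda>k. inner (w k - x) (A (w k))) \<longlonglongrightarrow> 0"
  proof (rule Lim_null_comparison)
    show "\<forall>\<^sub>F k in sequentially. norm (inner (w k - x) (A (w k))) \<le> (M + norm x) * norm (A (w k))"
    proof (intro always_eventually allI)
      fix k
      have "norm (inner (w k - x) (A (w k))) \<le> norm (w k - x) * norm (A (w k))"
        using Cauchy_Schwarz_ineq2 by simp
      also have "\<dots> \<le> (M + norm x) * norm (A (w k))"
        apply (rule mult_right_mono)
        using M[of k] norm_triangle_ineq4[of "w k" x] by auto
      finally show "norm (inner (w k - x) (A (w k))) \<le> (M + norm x) * norm (A (w k))" .
    qed
    show "(\<lambda>k. (M + norm x) * norm (A (w k))) \<longlonglongrightarrow> 0"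
      using tendsto_mult[OF tendsto_const nAz, of "M + norm x"] by simp
  qed
  have t2: "(\<lambda>k. inner (w k - x) (A x)) \<longlonglongrightarrow> inner x (A x) - inner x (A x)"
    unfolding inner_diff_left by (intro tendsto_intros wk[rule_format])
  have L2: "(\<lambda>k. inner (w k - x) (A (w k) - A x)) \<longlonglongrightarrow> 0 - (inner x (A x) - inner x (A x))"
    unfolding inner_diff_right by (intro tendsto_diff t1 t2)
  have "(1-\<kappa>)/2 * (norm (0 - A x))\<^sup>2 \<le> 0 - (inner x (A x) - inner x (A x))"
    by (rule LIMSEQ_le[OF L1 L2]) (use ineq in auto)
  hence "(1-\<kappa>)/2 * (norm (A x))\<^sup>2 \<le> 0" by simp
  moreover have "(1-\<kappa>)/2 > 0" using k1 by simp
  ultimately have "(norm (A x))\<^sup>2 \<le> 0"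
    by (metis mult_le_0_iff not_le power2_less_0 order.strict_iff_order)
  hence "A x = 0" by simp
  thus ?thesis unfolding A_def by simp
qed

lemma comb_aux:
  "(1/2) *\<^sub>R (2 *\<^sub>R u - (1 - a) *\<^sub>R (v::'a::real_vector)) + (1/2 * (k - a)) *\<^sub>R v = u - ((1 - k) / 2) *\<^sub>R v"
proof -
  have 1: "(1/2) *\<^sub>R (2 *\<^sub>R u - (1 - a) *\<^sub>R v) = u + (- (1/2 * (1 - a))) *\<^sub>R v"
    by (simp add: scaleR_diff_right)
  have "- (1/2 * (1 - a)) + 1/2 * (k - a) = - ((1 - k) / 2)" by (simp add: field_simps)
  hence "(- (1/2 * (1 - a))) *\<^sub>R v + (1/2 * (k - a)) *\<^sub>R v = (- ((1 - k) / 2)) *\<^sub>R v"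
    by (metis scaleR_left_distrib)
  thus ?thesis unfolding 1 by (simp add: algebra_simps)
qed

theorem lemma4:
  fixes \<kappa> :: real
    and Q :: "nat \<Rightarrow> 'a::{real_inner,complete_space} \<Rightarrow> 'a"
    and F :: "'a set"
    and \<alpha> :: "nat \<Rightarrow> real"
    and R T :: "nat \<Rightarrow> 'a \<Rightarrow> 'a"
  assumes kappa: "0 \<le> \<kappa>" "\<kappa> < 1"
    and Qn: "\<And>n. strict_pseudocontraction \<kappa> (Q n)"
    and FixQ: "\<And>n. Fix (Q n) = F"
    and alpha: "\<And>n. \<kappa> < \<alpha> n \<and> \<alpha> n < 1"
    and subseq: "\<And>\<sigma> :: nat \<Rightarrow> nat. strict_mono \<sigma> \<Longrightarrow>
        \<exists>(\<mu> :: nat \<Rightarrow> nat) Q'. strict_mono \<mu> \<and> strict_pseudocontraction \<kappa> Q' \<and> Fix Q' = F \<and>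
          (\<forall>B. bounded B \<longrightarrow> uniform_limit B (\<lambda>n. Q (\<sigma> (\<mu> n))) Q' sequentially)"
    and R_def: "\<And>n x. R n x = \<alpha> n *\<^sub>R x + (1 - \<alpha> n) *\<^sub>R Q n x"
    and T_def: "\<And>n x. T n x = (1/2) *\<^sub>R (x + R n x)
                   + ((1/2) * ((\<kappa> - \<alpha> n) / (1 - \<alpha> n))) *\<^sub>R (x - R n x)"
  shows "\<forall>z :: nat \<Rightarrow> 'a. bounded (range z)
           \<and> summable (\<lambda>n. (norm (z (Suc n) - z n))\<^sup>2)
           \<and> summable (\<lambda>n. (norm (z n - T n (z n)))\<^sup>2)
           \<longrightarrow> (\<forall>x. weak_cluster_point z x \<longrightarrow> x \<in> (\<Inter>n. Fix (T n)))"
proof -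
  define c where "c = (1 - \<kappa>) / 2"
  have cpos: "c > 0" using kappa unfolding c_def by simp
  have Tform: "T n u = u - c *\<^sub>R (u - Q n u)" for n u
  proof -
    have a1: "1 - \<alpha> n \<noteq> 0" using alpha[of n] by simp
    have d: "u - R n u = (1 - \<alpha> n) *\<^sub>R (u - Q n u)"
      by (simp add: R_def algebra_simps)
    have s: "u + R n u = 2 *\<^sub>R u - (1 - \<alpha> n) *\<^sub>R (u - Q n u)"
      by (simp add: R_def algebra_simps scaleR_2)
    have b: "(1/2 * ((\<kappa> - \<alpha> n)/(1 - \<alpha> n))) *\<^sub>R ((1-\<alpha> n) *\<^sub>R (u - Q n u)) = (1/2 * (\<kappa> - \<alpha> n)) *\<^sub>R (u - Q n u)"
    proof -
      have e: "((\<kappa> - \<alpha> n)/(1 - \<alpha> n)) * (1 - \<alpha> n) = (\<kappa> - \<alpha> n)" using a1 by simp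
      show ?thesis by (simp only: scaleR_scaleR mult.assoc e)
    qed
    have "T n u = (1/2) *\<^sub>R (2 *\<^sub>R u - (1 - \<alpha> n) *\<^sub>R (u - Q n u)) + (1/2 * (\<kappa> - \<alpha> n)) *\<^sub>R (u - Q n u)"
      unfolding T_def s d b ..
    also have "\<dots> = u - c *\<^sub>R (u - Q n u)"
      unfolding c_def by (rule comb_aux)
    finally show ?thesis .
  qed
  show ?thesis
  proof (intro allI impI)
    fix z :: "nat \<Rightarrow> 'a" and x
    assume H: "bounded (range z) \<and> summable (\<lambda>n. (norm (z (Suc n) - z n))\<^sup>2)
           \<and> summable (\<lambda>n. (norm (z n - T n (z n)))\<^sup>2)"
      and wc: "weak_cluster_point z x"
    obtain r where r: "strict_mono r" and rw: "weakly_converges_to (z \<circ> r) x"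
      using wc unfolding weak_cluster_point_def by auto
    obtain \<mu> Q' where mu: "strict_mono \<mu>" and sp: "strict_pseudocontraction \<kappa> Q'"
      and FQ: "Fix Q' = F"
      and ul: "\<forall>B. bounded B \<longrightarrow> uniform_limit B (\<lambda>n. Q (r (\<mu> n))) Q' sequentially"
      using subseq[OF r] by blast
    have sq: "(\<lambda>n. (norm (z n - T n (z n)))\<^sup>2) \<longlonglongrightarrow> 0"
      using H summable_LIMSEQ_zero by blast
    have "(\<lambda>n. sqrt ((norm (z n - T n (z n)))\<^sup>2)) \<longlonglongrightarrow> sqrt 0"
      by (intro tendsto_intros sq)
    hence "(\<lambda>n. norm (z n - T n (z n))) \<longlonglongrightarrow> 0" by simp
    hence zT: "(\<lambda>n. z n - T n (z n)) \<longlonglongrightarrow> 0" using tendsto_norm_zero_iff by blast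
    have "(\<lambda>n. (1/c) *\<^sub>R (z n - T n (z n))) \<longlonglongrightarrow> (1/c) *\<^sub>R 0"
      by (intro tendsto_intros zT)
    moreover have "(1/c) *\<^sub>R (z n - T n (z n)) = z n - Q n (z n)" for n
      using cpos by (simp add: Tform)
    ultimately have zQ: "(\<lambda>n. z n - Q n (z n)) \<longlonglongrightarrow> 0" by simp
    define w where "w k = z (r (\<mu> k))" for k
    have smono: "strict_mono (r \<circ> \<mu>)" using r mu by (simp add: strict_mono_o)
    have w1: "(\<lambda>k. w k - Q (r (\<mu> k)) (w k)) \<longlonglongrightarrow> 0"
      using LIMSEQ_subseq_LIMSEQ[OF zQ smono] unfolding w_def o_def .
    have w2: "(\<lambda>k. Q (r (\<mu> k)) (w k) - Q' (w k)) \<longlonglongrightarrow> 0"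
    proof (rule LIMSEQ_I)
      fix e :: real assume e: "0 < e"
      have "uniform_limit (range z) (\<lambda>n. Q (r (\<mu> n))) Q' sequentially"
        using ul H by blast
      from uniform_limitD[OF this e]
      obtain N where N: "\<And>n. n \<ge> N \<Longrightarrow> \<forall>y\<in>range z. dist (Q (r (\<mu> n)) y) (Q' y) < e"
        unfolding eventually_sequentially by blast
      show "\<exists>N. \<forall>n\<ge>N. norm (Q (r (\<mu> n)) (w n) - Q' (w n) - 0) < e"
        using N unfolding w_def dist_norm by auto
    qed
    have w3: "(\<lambda>k. w k - Q' (w k)) \<longlonglongrightarrow> 0"
      using tendsto_add[OF w1 w2] by simp
    have bw: "bounded (range w)"
    proof -
      have "range w \<subseteq> range z" unfolding w_def by auto
      thus ?thesis using H bounded_subset by blast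
    qed
    have ww: "\<forall>y. (\<lambda>k. inner (w k) y) \<longlonglongrightarrow> inner x y"
    proof
      fix y
      have "(\<lambda>n. inner ((z \<circ> r) n) y) \<longlonglongrightarrow> inner x y"
        using rw unfolding weakly_converges_to_def by blast
      from LIMSEQ_subseq_LIMSEQ[OF this mu]
      show "(\<lambda>k. inner (w k) y) \<longlonglongrightarrow> inner x y" unfolding w_def o_def .
    qed
    have "Q' x = x" by (rule demi[OF sp bw w3 ww])
    hence "x \<in> F" using FQ unfolding Fix_def by auto
    hence "Q n x = x" for n using FixQ[of n] unfolding Fix_def by auto
    thus "x \<in> (\<Inter>n. Fix (T n))" unfolding Fix_def by (simp add: Tform)
  qed
qed

end
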